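(* Let $0\le c\le a\le 1/2$ and consider the following eight points of $\mathbb{R}^2$: $q_U=(a,3-c)$, $q_D=(a,-1-c)$, $q_{UL}=(-1+c,2+a)$, $q_L=(-1-a,c)$, $q_{LD}=(-1-c,-a)$, $q_{UR}=(2-c,3-a)$, $q_R=(3-a,c)$, $q_{RD}=(2+c,-1+a)$, and let $W$ be the set of these points. Then the segment $[q_U,q_D]$ is a Delaunay edge of $W$, i.e., there exists a circle passing through $q_U$ and $q_D$ such that every other point of $W$ lies outside or on this circle. *)

theory Defs
  imports "HOL-Analysis.Analysis"
begin

definition qU :: "real \<Rightarrow> real \<Rightarrow> real \<times> real" where "qU a c = (a, 3 - c)"
definition qD :: "real \<Rightarrow> real \<Rightarrow> real \<times> real" where "qD a c = (a, -1 - c)"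
definition qUL :: "real \<Rightarrow> real \<Rightarrow> real \<times> real" where "qUL a c = (-1 + c, 2 + a)"
definition qL :: "real \<Rightarrow> real \<Rightarrow> real \<times> real" where "qL a c = (-1 - a, c)"
definition qLD :: "real \<Rightarrow> real \<Rightarrow> real \<times> real" where "qLD a c = (-1 - c, -a)"
definition qUR :: "real \<Rightarrow> real \<Rightarrow> real \<times> real" where "qUR a c = (2 - c, 3 - a)"
definition qR :: "real \<Rightarrow> real \<Rightarrow> real \<times> real" where "qR a c = (3 - a, c)"
definition qRD :: "real \<Rightarrow> real \<Rightarrow> real \<times> real" where "qRD a c = (2 + c, -1 + a)"

definition W :: "real \<Rightarrow> real \<Rightarrow> (real \<times> real) set" where
  "W a c = {qU a c, qD a c, qUL a c, qL a c, qLD a c, qUR a c, qR a c, qRD a c}"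

definition delaunay_edge :: "(real \<times> real) set \<Rightarrow> real \<times> real \<Rightarrow> real \<times> real \<Rightarrow> bool" where
  "delaunay_edge S p q \<longleftrightarrow>
     (\<exists>z r. dist z p = r \<and> dist z q = r \<and> (\<forall>w\<in>S. dist z w \<ge> r))"

end

theory Submission
  imports Defs
begin

lemma dsq: "dist (x1::real, y1::real) (x2, y2) = sqrt ((x1 - x2)^2 + (y1 - y2)^2)"
  by (simp add: dist_Pair_Pair dist_real_def)

theorem mainTheorem7:
  fixes a c :: real
  assumes "0 \<le> c" and "c \<le> a" and "a \<le> 1/2"
  shows "delaunay_edge (W a c) (qU a c) (qD a c)"
  unfolding delaunay_edge_def
proof (intro exI conjI)
  let ?z = "(1 - a, 1 - c)"
  show "dist ?z (qU a c) = dist ?z (qU a c)" by simp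
  show "dist ?z (qD a c) = dist ?z (qU a c)"
    by (simp add: qU_def qD_def dsq power2_eq_square algebra_simps)
  have le: "dist ?z (qU a c) \<le> dist ?z p" if "(fst ?z - fst (qU a c))^2 + (snd ?z - snd (qU a c))^2
       \<le> (fst ?z - fst p)^2 + (snd ?z - snd p)^2" for p
    using that by (cases p) (simp add: dsq qU_def)
  have h0: "0 \<le> 4 * a * c" using assms by simp
  have h1: "0 \<le> (a - c) * (1 - a - c)" using assms by (intro mult_nonneg_nonneg) auto
  have h2: "0 \<le> (a - c) * c" using assms by simp
  have h3: "0 \<le> (a - c) * a" using assms by simp
  have h4: "0 \<le> (1 - 2*a) * c" using assms by simp
  have h5: "0 \<le> (1 - 2*a) * a" using assms by simp
  have h6: "0 \<le> (1 - 2*a) * (a-c)" using assms by simp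
  have d_qU: "dist ?z (qU a c) \<le> dist ?z (qU a c)"
    by (rule le; insert h0 h1 h2 h3 h4 h5 h6; simp add: qU_def qU_def power2_eq_square algebra_simps; linarith)
  have d_qD: "dist ?z (qU a c) \<le> dist ?z (qD a c)"
    by (rule le; insert h0 h1 h2 h3 h4 h5 h6; simp add: qD_def qU_def power2_eq_square algebra_simps; linarith)
  have d_qUL: "dist ?z (qU a c) \<le> dist ?z (qUL a c)"
    by (rule le; insert h0 h1 h2 h3 h4 h5 h6; simp add: qUL_def qU_def power2_eq_square algebra_simps; linarith)
  have d_qL: "dist ?z (qU a c) \<le> dist ?z (qL a c)"
    by (rule le; insert h0 h1 h2 h3 h4 h5 h6; simp add: qL_def qU_def power2_eq_square algebra_simps; linarith)
  have d_qLD: "dist ?z (qU a c) \<le> dist ?z (qLD a c)"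
    by (rule le; insert h0 h1 h2 h3 h4 h5 h6; simp add: qLD_def qU_def power2_eq_square algebra_simps; linarith)
  have d_qUR: "dist ?z (qU a c) \<le> dist ?z (qUR a c)"
    by (rule le; insert h0 h1 h2 h3 h4 h5 h6; simp add: qUR_def qU_def power2_eq_square algebra_simps; linarith)
  have d_qR: "dist ?z (qU a c) \<le> dist ?z (qR a c)"
    by (rule le; insert h0 h1 h2 h3 h4 h5 h6; simp add: qR_def qU_def power2_eq_square algebra_simps; linarith)
  have d_qRD: "dist ?z (qU a c) \<le> dist ?z (qRD a c)"
    by (rule le; insert h0 h1 h2 h3 h4 h5 h6; simp add: qRD_def qU_def power2_eq_square algebra_simps; linarith)
  show "\<forall>w\<in>W a c. dist ?z (qU a c) \<le> dist ?z w"
    using d_qU d_qD d_qUL d_qL d_qLD d_qUR d_qR d_qRD by (simp add: W_def)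
qed

end
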